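(* Let $d\ge 7$, let $G$ be a $d$-regular graph with girth $5$, let $x\in V(G)$ with neighbors $x_1,\dots,x_d$ (in this fixed order) and bunches $X_t=N(x_t)\setminus\{x\}$, $t\in[d]$. Fix $i$ with $2\le i\le d$ and suppose every vertex of $X_i$ has backward degree at most $1$. Suppose $c$ is a proper partial coloring of $G$ defined on $N[x]\cup\bigcup_{t\in[i-1]}X_t$ with $c(x)=d+1$, $c(x_t)=t$ for all $t\in[d]$, and such that for each $t\in[i-1]$ the vertices of $X_t$ receive pairwise distinct colors from $[d]\setminus\{t\}$ (so that $x,x_1,\dots,x_{i-1}$ are b-vertices of colors $d+1,1,\dots,i-1$). Then $c$ can be extended to a proper partial coloring on $N[x]\cup\bigcup_{t\in[i]}X_t$ in which the vertices of $X_i$ receive pairwise distinct colors from $[d]\setminus\{i\}$, so that $x_i$ is also a b-vertex (of color $i$).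
   Context: $[k]=\{1,\dots,k\}$. The $i$-th bunch of $x$ is $X_i=N(x_i)\setminus\{x\}$, which has $d-1$ vertices. With respect to the ordering $x_1,\dots,x_d$, the backward degree of a vertex $v\in X_i$ is the number of neighbors of $v$ in $X_1\cup\dots\cup X_{i-1}$. A vertex $v$ is a b-vertex of a (partial) coloring with colors $[d+1]$ if all $d+1$ colors appear on its closed neighborhood $N[v]$. *)

theory Defs
  imports Main
begin

definition simple_graph :: "'a set \<Rightarrow> ('a \<Rightarrow> 'a \<Rightarrow> bool) \<Rightarrow> bool" where
  "simple_graph V E \<longleftrightarrow> finite V \<and> (\<forall>u v. E u v \<longrightarrow> u \<in> V \<and> v \<in> V)
     \<and> (\<forall>u v. E u v \<longrightarrow> E v u) \<and> (\<forall>v. \<not> E v v)"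

definition nbhd :: "'a set \<Rightarrow> ('a \<Rightarrow> 'a \<Rightarrow> bool) \<Rightarrow> 'a \<Rightarrow> 'a set" where
  "nbhd V E v = {u \<in> V. E v u}"

definition closed_nbhd :: "'a set \<Rightarrow> ('a \<Rightarrow> 'a \<Rightarrow> bool) \<Rightarrow> 'a \<Rightarrow> 'a set" where
  "closed_nbhd V E v = insert v (nbhd V E v)"

definition regular :: "'a set \<Rightarrow> ('a \<Rightarrow> 'a \<Rightarrow> bool) \<Rightarrow> nat \<Rightarrow> bool" where
  "regular V E d \<longleftrightarrow> (\<forall>v\<in>V. card (nbhd V E v) = d)"

definition girth5 :: "'a set \<Rightarrow> ('a \<Rightarrow> 'a \<Rightarrow> bool) \<Rightarrow> bool" where
  "girth5 V E \<longleftrightarrow>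
     (\<nexists>a b c. distinct [a,b,c] \<and> E a b \<and> E b c \<and> E c a)
   \<and> (\<nexists>a b c e. distinct [a,b,c,e] \<and> E a b \<and> E b c \<and> E c e \<and> E e a)
   \<and> (\<exists>a b c e f. distinct [a,b,c,e,f] \<and> E a b \<and> E b c \<and> E c e \<and> E e f \<and> E f a)"

definition bunch :: "'a set \<Rightarrow> ('a \<Rightarrow> 'a \<Rightarrow> bool) \<Rightarrow> 'a \<Rightarrow> (nat \<Rightarrow> 'a) \<Rightarrow> nat \<Rightarrow> 'a set" where
  "bunch V E x xs t = nbhd V E (xs t) - {x}"

definition backward_degree :: "'a set \<Rightarrow> ('a \<Rightarrow> 'a \<Rightarrow> bool) \<Rightarrow> 'a \<Rightarrow> (nat \<Rightarrow> 'a) \<Rightarrow> nat \<Rightarrow> 'a \<Rightarrow> nat" where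
  "backward_degree V E x xs i v = card (nbhd V E v \<inter> (\<Union>t\<in>{1..<i}. bunch V E x xs t))"

definition proper_partial :: "('a \<Rightarrow> 'a \<Rightarrow> bool) \<Rightarrow> ('a \<rightharpoonup> nat) \<Rightarrow> bool" where
  "proper_partial E c \<longleftrightarrow> (\<forall>u v. u \<in> dom c \<longrightarrow> v \<in> dom c \<longrightarrow> E u v \<longrightarrow> c u \<noteq> c v)"

end

theory Submission
  imports Defs
begin


lemma swap_perm:
  assumes fin: "finite X" "finite C" "card X = card C"
   and one: "\<forall>v\<in>X. \<forall>k k'. F v k \<longrightarrow> F v k' \<longrightarrow> k = k'"
   and hall: "\<forall>k\<in>C. \<exists>v\<in>X. \<not> F v k"
  shows "\<exists>\<sigma>. bij_betw \<sigma> X C \<and> (\<forall>v\<in>X. \<not> F v (\<sigma> v))"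
proof -
  have main: "\<forall>\<sigma>. bij_betw \<sigma> X C \<and> card {v\<in>X. F v (\<sigma> v)} = n \<longrightarrow>
      (\<exists>\<sigma>'. bij_betw \<sigma>' X C \<and> (\<forall>v\<in>X. \<not> F v (\<sigma>' v)))" for n
  proof (induction n rule: less_induct)
    case (less n)
    show ?case
    proof (intro allI impI)
      fix \<sigma> assume a: "bij_betw \<sigma> X C \<and> card {v\<in>X. F v (\<sigma> v)} = n"
      show "\<exists>\<sigma>'. bij_betw \<sigma>' X C \<and> (\<forall>v\<in>X. \<not> F v (\<sigma>' v))"
      proof (cases "\<forall>v\<in>X. \<not> F v (\<sigma> v)")
        case True thus ?thesis using a by blast
      next
        case False
        then obtain v where v: "v\<in>X" "F v (\<sigma> v)" by blast
        have "\<sigma> v \<in> C" using a v bij_betwE by blast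
        then obtain w where w: "w\<in>X" "\<not> F w (\<sigma> v)" using hall by blast
        have wv: "w \<noteq> v" using v w by blast
        have inj: "inj_on \<sigma> X" using a bij_betw_def by blast
        define \<sigma>' where "\<sigma>' = \<sigma>(v := \<sigma> w, w := \<sigma> v)"
        have "\<sigma>' = \<sigma> \<circ> (\<lambda>u. if u = v then w else if u = w then v else u)"
          unfolding \<sigma>'_def using wv by auto
        moreover have "bij_betw (\<lambda>u. if u = v then w else if u = w then v else u) X X"
          unfolding bij_betw_def inj_on_def using v w by (auto simp: image_def)
        ultimately have bij': "bij_betw \<sigma>' X C" using a bij_betw_trans by blast
        have sub: "{u\<in>X. F u (\<sigma>' u)} \<subseteq> {u\<in>X. F u (\<sigma> u)} - {v}"
        proof
          fix u assume u: "u \<in> {u\<in>X. F u (\<sigma>' u)}"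
          show "u \<in> {u\<in>X. F u (\<sigma> u)} - {v}"
          proof (cases "u = v")
            case True
            then have "F v (\<sigma> w)" using u wv unfolding \<sigma>'_def by auto
            then have "\<sigma> w = \<sigma> v" using one v by blast
            then show ?thesis using inj v w wv inj_on_def by metis
          next
            case False
            then show ?thesis using u w unfolding \<sigma>'_def by (auto split: if_splits)
          qed
        qed
        have "card {u\<in>X. F u (\<sigma>' u)} < n"
        proof -
          have "card {u\<in>X. F u (\<sigma>' u)} \<le> card ({u\<in>X. F u (\<sigma> u)} - {v})"
            using sub fin by (intro card_mono) auto
          also have "\<dots> < card {u\<in>X. F u (\<sigma> u)}"
            using v fin by (intro card_Diff1_less) auto
          finally show ?thesis using a by simp
        qed
        then show ?thesis using less bij' by blast
      qed
    qed
  qed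
  obtain \<sigma> where "bij_betw \<sigma> X C" using fin finite_same_card_bij by blast
  then show ?thesis using main by blast
qed


theorem mainTheorem6:
  fixes V :: "'a set" and E :: "'a \<Rightarrow> 'a \<Rightarrow> bool" and d i :: nat
    and x :: 'a and xs :: "nat \<Rightarrow> 'a" and c :: "'a \<rightharpoonup> nat"
  assumes graph: "simple_graph V E"
    and d7: "d \<ge> 7"
    and reg: "regular V E d"
    and girth: "girth5 V E"
    and xV: "x \<in> V"
    and xs_bij: "bij_betw xs {1..d} (nbhd V E x)"
    and i_range: "2 \<le> i" "i \<le> d"
    and bdeg: "\<forall>v \<in> bunch V E x xs i. backward_degree V E x xs i v \<le> 1"
    and c_proper: "proper_partial E c"
    and c_dom: "dom c = closed_nbhd V E x \<union> (\<Union>t\<in>{1..<i}. bunch V E x xs t)"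
    and c_x: "c x = Some (d + 1)"
    and c_xs: "\<forall>t\<in>{1..d}. c (xs t) = Some t"
    and c_bunch: "\<forall>t\<in>{1..<i}. inj_on c (bunch V E x xs t)
                    \<and> (\<forall>v \<in> bunch V E x xs t. the (c v) \<in> {1..d} - {t})"
  shows "\<exists>c'. c \<subseteq>\<^sub>m c' \<and> proper_partial E c'
            \<and> dom c' = closed_nbhd V E x \<union> (\<Union>t\<in>{1..i}. bunch V E x xs t)
            \<and> inj_on c' (bunch V E x xs i)
            \<and> (\<forall>v \<in> bunch V E x xs i. the (c' v) \<in> {1..d} - {i})"
proof -
  have finV: "finite V" and inV: "\<And>u v. E u v \<Longrightarrow> u \<in> V \<and> v \<in> V"
    and sym: "\<And>u v. E u v \<Longrightarrow> E v u" and irr: "\<And>v. \<not> E v v"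
    using graph unfolding simple_graph_def by blast+
  have tri: "\<And>a b c. E a b \<Longrightarrow> E b c \<Longrightarrow> E c a \<Longrightarrow> False"
  proof -
    fix a b c assume h: "E a b" "E b c" "E c a"
    have "distinct [a,b,c]" using h irr by auto
    then show False using h girth unfolding girth5_def by blast
  qed
  have quad: "\<And>a b c e. E a b \<Longrightarrow> E b c \<Longrightarrow> E c e \<Longrightarrow> E e a \<Longrightarrow> a \<noteq> c \<Longrightarrow> b \<noteq> e \<Longrightarrow> False"
  proof -
    fix a b c e assume h: "E a b" "E b c" "E c e" "E e a" "a \<noteq> c" "b \<noteq> e"
    have "distinct [a,b,c,e]" using h irr by auto
    then show False using h girth unfolding girth5_def by blast
  qed
  define B where "B t = bunch V E x xs t" for t
  have Bmem: "\<And>t u. u \<in> B t \<longleftrightarrow> u \<in> V \<and> E (xs t) u \<and> u \<noteq> x"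
    unfolding B_def bunch_def nbhd_def by auto
  have xsN: "\<And>t. t \<in> {1..d} \<Longrightarrow> xs t \<in> V \<and> E x (xs t)"
    using xs_bij unfolding bij_betw_def nbhd_def by auto
  have xs_inj: "inj_on xs {1..d}" using xs_bij bij_betw_def by blast
  have nbx: "\<And>w. E x w \<Longrightarrow> \<exists>j\<in>{1..d}. w = xs j"
  proof -
    fix w assume "E x w"
    then have "w \<in> nbhd V E x" using inV unfolding nbhd_def by auto
    then show "\<exists>j\<in>{1..d}. w = xs j" using xs_bij unfolding bij_betw_def by auto
  qed
  have iD: "i \<in> {1..d}" using i_range by auto
  have xi: "xs i \<in> V" "E x (xs i)" using xsN iD by auto
  define Xi where "Xi = B i"
  define Er where "Er = (\<Union>t\<in>{1..<i}. B t)"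
  have Xi_not_nx: "\<And>u. u \<in> Xi \<Longrightarrow> \<not> E x u"
    using tri[of x "xs i"] xi(2) sym Bmem unfolding Xi_def by blast
  have Xi_not_Er: "\<And>u. u \<in> Xi \<Longrightarrow> u \<notin> Er"
  proof
    fix u assume u: "u \<in> Xi" and "u \<in> Er"
    then obtain t where t: "t \<in> {1..<i}" "u \<in> B t" unfolding Er_def by blast
    have td: "t \<in> {1..d}" using t i_range by auto
    have "xs t \<noteq> xs i" using inj_onD[OF xs_inj _ td iD] t(1) by auto
    moreover have "E (xs t) u" "E (xs i) u" "u \<noteq> x" using t u Bmem unfolding Xi_def by auto
    ultimately show False using quad[of x "xs t" u "xs i"] xsN[OF td] xi sym by blast
  qed
  have Xi_undom: "\<And>u. u \<in> Xi \<Longrightarrow> u \<notin> dom c"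
  proof -
    fix u assume u: "u \<in> Xi"
    have "u \<noteq> x" using u Bmem unfolding Xi_def by blast
    then have "u \<notin> closed_nbhd V E x" using Xi_not_nx[OF u]
      unfolding closed_nbhd_def nbhd_def by blast
    moreover have "dom c = closed_nbhd V E x \<union> Er" using c_dom unfolding Er_def B_def by simp
    ultimately show "u \<notin> dom c" using Xi_not_Er[OF u] by blast
  qed
  have Xi_indep: "\<And>u w. u \<in> Xi \<Longrightarrow> w \<in> Xi \<Longrightarrow> \<not> E u w"
  proof -
    fix u w assume "u \<in> Xi" "w \<in> Xi"
    then have "E (xs i) u" "E (xs i) w" using Bmem unfolding Xi_def by auto
    then show "\<not> E u w" using tri[of "xs i" u w] sym by blast
  qed
  have "Xi \<subseteq> V" using Bmem unfolding Xi_def by blast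
  then have finXi: "finite Xi" using finV finite_subset by blast
  have cardXi: "card Xi = d - 1"
  proof -
    have "card (nbhd V E (xs i)) = d" using reg xi unfolding regular_def by auto
    moreover have "x \<in> nbhd V E (xs i)" using xi sym xV unfolding nbhd_def by auto
    ultimately show ?thesis unfolding Xi_def B_def bunch_def by (simp add: card_Diff_singleton)
  qed
  define C where "C = {1..d} - {i}"
  have cardC: "card C = d - 1" unfolding C_def using iD by (simp add: card_Diff_singleton)
  define F where "F u k = (\<exists>w\<in>Er. E u w \<and> c w = Some k)" for u k
  have finEr: "finite Er" unfolding Er_def using finV Bmem by (auto intro: finite_subset)
  have one: "\<forall>v\<in>Xi. \<forall>k k'. F v k \<longrightarrow> F v k' \<longrightarrow> k = k'"
  proof (intro ballI allI impI)
    fix v k k' assume v: "v \<in> Xi" and "F v k" "F v k'"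
    then obtain w w' where w: "w \<in> Er" "E v w" "c w = Some k" "w' \<in> Er" "E v w'" "c w' = Some k'"
      unfolding F_def by blast
    have "card (nbhd V E v \<inter> Er) \<le> 1" using bdeg v unfolding backward_degree_def Xi_def Er_def B_def by auto
    moreover have "w \<in> nbhd V E v \<inter> Er" "w' \<in> nbhd V E v \<inter> Er" using w inV unfolding nbhd_def by auto
    moreover have "finite (nbhd V E v \<inter> Er)" using finEr by auto
    ultimately have "w = w'" using card_le_Suc0_iff_eq[of "nbhd V E v \<inter> Er"] by simp
    then show "k = k'" using w by simp
  qed
  have hall: "\<forall>k\<in>C. \<exists>v\<in>Xi. \<not> F v k"
  proof (rule ccontr)
    assume "\<not> (\<forall>k\<in>C. \<exists>v\<in>Xi. \<not> F v k)"
    then obtain k where k: "k \<in> C" "\<forall>v\<in>Xi. F v k" by blast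
    define g where "g u = (SOME t. t \<in> {1..<i} \<and> (\<exists>w\<in>B t. E u w \<and> c w = Some k))" for u
    have g: "g u \<in> {1..<i} \<and> (\<exists>w\<in>B (g u). E u w \<and> c w = Some k)" if "u \<in> Xi" for u
    proof -
      have "\<exists>t. t \<in> {1..<i} \<and> (\<exists>w\<in>B t. E u w \<and> c w = Some k)"
        using k that unfolding F_def Er_def by blast
      then show ?thesis unfolding g_def by (rule someI_ex)
    qed
    have "inj_on g Xi"
    proof (rule inj_onI)
      fix u u' assume u: "u \<in> Xi" "u' \<in> Xi" "g u = g u'"
      obtain w where w: "w \<in> B (g u)" "E u w" "c w = Some k" using g u by blast
      obtain w' where w': "w' \<in> B (g u')" "E u' w'" "c w' = Some k" using g u by blast
      have gu: "g u \<in> {1..<i}" using g[OF u(1)] by blast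
      have "inj_on c (B (g u))" using c_bunch gu unfolding B_def by blast
      then have ww: "w = w'" using w w' u(3) unfolding inj_on_def by auto
      show "u = u'"
      proof (rule ccontr)
        assume ne: "u \<noteq> u'"
        have "w \<noteq> xs i"
        proof
          assume "w = xs i"
          moreover have td: "g u \<in> {1..d}" using gu i_range by auto
          moreover have "xs (g u) \<noteq> xs i" using inj_onD[OF xs_inj _ td iD] gu by auto
          moreover have "E (xs (g u)) w" using w Bmem by auto
          ultimately have "E (xs (g u)) (xs i)" by simp
          moreover have "E x (xs (g u))" using xsN[OF td] by blast
          moreover have "E (xs i) x" using sym[OF xi(2)] .
          ultimately show False using tri by blast
        qed
        moreover have "E (xs i) u" "E (xs i) u'" using u Bmem unfolding Xi_def by auto
        moreover have "E u' w" using w' ww by simp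
        moreover have "E w u" using sym[OF w(2)] .
        ultimately show False using quad[of u "xs i" u' w] sym ne by blast
      qed
    qed
    moreover have "g ` Xi \<subseteq> {1..<i} - {k}"
    proof
      fix t assume "t \<in> g ` Xi"
      then obtain u where u: "u \<in> Xi" "t = g u" by blast
      have gg: "g u \<in> {1..<i} \<and> (\<exists>w\<in>B (g u). E u w \<and> c w = Some k)" using g[OF u(1)] .
      then obtain w where w: "w \<in> B t" "c w = Some k" using u(2) by blast
      have tt: "t \<in> {1..<i}" using gg u(2) by blast
      have "the (c w) \<in> {1..d} - {t}" using c_bunch tt w unfolding B_def by blast
      then show "t \<in> {1..<i} - {k}" using w tt by auto
    qed
    ultimately have "card Xi \<le> card ({1..<i} - {k})"
    proof -
      have "card Xi = card (g ` Xi)" using \<open>inj_on g Xi\<close> card_image by metis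
      also have "\<dots> \<le> card ({1..<i} - {k})" using \<open>g ` Xi \<subseteq> {1..<i} - {k}\<close> by (intro card_mono) auto
      finally show ?thesis .
    qed
    moreover have "card ({1..<i} - {k}) < d - 1"
    proof (cases "k < i")
      case True
      then have "card ({1..<i} - {k}) = i - 2" using k unfolding C_def by (simp add: card_Diff_singleton)
      then show ?thesis using i_range by simp
    next
      case False
      then have "i < d" using k i_range unfolding C_def by auto
      moreover have "card ({1..<i} - {k}) \<le> i - 1" using card_Diff1_le[of "{1..<i}" k] by simp
      ultimately show ?thesis using i_range by simp
    qed
    ultimately show False using cardXi by simp
  qed
  obtain \<sigma> where s: "bij_betw \<sigma> Xi C" "\<forall>v\<in>Xi. \<not> F v (\<sigma> v)"
    using swap_perm[OF finXi _ _ one hall] cardXi cardC unfolding C_def by auto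
  define c' where "c' u = (if u \<in> Xi then Some (\<sigma> u) else c u)" for u
  have sub: "c \<subseteq>\<^sub>m c'" unfolding map_le_def c'_def using Xi_undom by auto
  have propc: "proper_partial E c'"
    unfolding proper_partial_def
  proof (intro allI impI)
    fix u v assume u: "u \<in> dom c'" and v: "v \<in> dom c'" and e: "E u v"
    have key: "c' a \<noteq> c' b" if a: "a \<in> Xi" and b: "b \<notin> Xi" "b \<in> dom c" and e: "E a b" for a b
    proof -
      have domc: "dom c = closed_nbhd V E x \<union> Er" using c_dom unfolding Er_def B_def by simp
      have "b \<in> closed_nbhd V E x \<or> b \<in> Er" using b(2) unfolding domc by blast
      then show ?thesis
      proof
        assume "b \<in> closed_nbhd V E x"
        then have "b = x \<or> E x b" unfolding closed_nbhd_def nbhd_def by auto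
        then show ?thesis
        proof
          assume "b = x" then show ?thesis using e Xi_not_nx a sym by blast
        next
          assume "E x b"
          then obtain j where j: "j \<in> {1..d}" "b = xs j" using nbx by blast
          show ?thesis
          proof (cases "j = i")
            case True
            then have "c' b = Some i" using b(1) j True c_xs iD unfolding c'_def by simp
            moreover have "\<sigma> a \<in> C" using s a bij_betwE by blast
            ultimately show ?thesis unfolding c'_def C_def using a by auto
          next
            case False
            then have "xs i \<noteq> xs j" using inj_onD[OF xs_inj _ j(1) iD] by metis
            moreover have "x \<noteq> a" using a Bmem unfolding Xi_def by blast
            moreover have "E (xs i) a" using a Bmem unfolding Xi_def by auto
            moreover have "E a (xs j)" using e j(2) by simp
            moreover have "E (xs j) x" using sym[OF \<open>E x b\<close>] j(2) by simp
            ultimately have False using quad[OF xi(2)] by blast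
            then show ?thesis by blast
          qed
        qed
      next
        assume "b \<in> Er"
        show ?thesis
        proof
          assume eq: "c' a = c' b"
          then have "c b = Some (\<sigma> a)" using a b(1) unfolding c'_def by simp
          then have "F a (\<sigma> a)" unfolding F_def using \<open>b \<in> Er\<close> e by blast
          then show False using s(2) a by blast
        qed
      qed
    qed
    show "c' u \<noteq> c' v"
    proof (cases "u \<in> Xi")
      case True
      then have "v \<notin> Xi" using Xi_indep e by blast
      moreover have "v \<in> dom c" using v \<open>v \<notin> Xi\<close> unfolding c'_def dom_def by simp
      ultimately show ?thesis using key[OF True _ _ e] by blast
    next
      case False
      show ?thesis
      proof (cases "v \<in> Xi")
        case True
        moreover have "u \<in> dom c" using u \<open>u \<notin> Xi\<close> unfolding c'_def dom_def by simp
        ultimately have "c' v \<noteq> c' u" using key[OF True \<open>u \<notin> Xi\<close> _ sym[OF e]] by blast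
        then show ?thesis by metis
      next
        case False
        have "u \<in> dom c" "v \<in> dom c" using u v \<open>u \<notin> Xi\<close> False unfolding c'_def dom_def by simp_all
        then have "c u \<noteq> c v" using c_proper e unfolding proper_partial_def by blast
        then show ?thesis using \<open>u \<notin> Xi\<close> False unfolding c'_def by simp
      qed
    qed
  qed
  have "{1..i} = insert i {1..<i}" using i_range by auto
  then have U: "(\<Union>t\<in>{1..i}. bunch V E x xs t) = Xi \<union> (\<Union>t\<in>{1..<i}. bunch V E x xs t)"
    unfolding Xi_def B_def by simp
  have "dom c' = dom c \<union> Xi" unfolding c'_def dom_def by auto
  then have dom': "dom c' = closed_nbhd V E x \<union> (\<Union>t\<in>{1..i}. bunch V E x xs t)"
    unfolding U c_dom by blast
  have inj': "inj_on c' Xi" using s unfolding c'_def bij_betw_def inj_on_def by auto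
  have col: "\<forall>v \<in> Xi. the (c' v) \<in> {1..d} - {i}"
  proof
    fix v assume "v \<in> Xi"
    then have "\<sigma> v \<in> C" "c' v = Some (\<sigma> v)" using bij_betwE[OF s(1)] unfolding c'_def by auto
    then show "the (c' v) \<in> {1..d} - {i}" unfolding C_def by simp
  qed
  show ?thesis using sub propc dom' inj' col unfolding Xi_def B_def by blast
qed

end
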